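(* Let $\mathcal{R}$ be a von Neumann algebra, $A\in\mathcal{R}_{sa}$ with spectral family $(E^A_\lambda)_{\lambda\in\mathbb{R}}$, and let $\lambda\in f_A(\mathcal{D}(\mathcal{R}))$. Put $\mathcal{J}_\lambda:=\bigcap\{\mathcal{J}\in\mathcal{D}(\mathcal{R}) : f_A(\mathcal{J})=\lambda\}$. Then $$\mathcal{J}_\lambda=\{P\in\mathcal{P}(\mathcal{R}) : \exists\,\mu>\lambda : P\ge E^A_\mu\};$$ moreover $\mathcal{J}_\lambda=H_{E^A_\lambda}$ if and only if $E^A$ is constant on some interval $[\lambda,\lambda+\delta]$ with $\delta>0$; and $E^A_\lambda=\inf\mathcal{J}_\lambda$ (the infimum in $\mathcal{P}(\mathcal{R})$).
   Context: $\mathcal{P}(\mathcal{R})$ is the projection lattice of $\mathcal{R}$. A dual ideal of $\mathcal{P}(\mathcal{R})$ is a nonempty subset $\mathcal{J}$ with $0\notin\mathcal{J}$, $P,Q\in\mathcal{J}\Rightarrow P\wedge Q\in\mathcal{J}$, and $P\in\mathcal{J},P\le Q\Rightarrow Q\in\mathcal{J}$; $\mathcal{D}(\mathcal{R})$ is the set of dual ideals. For $P\neq0$, $H_P:=\{Q : Q\ge P\}$. The spectral family is right-continuous, and $f_A(\mathcal{J}):=\inf\{\lambda : E^A_\lambda\in\mathcal{J}\}$ for $\mathcal{J}\in\mathcal{D}(\mathcal{R})$. *)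

theory Defs
  imports Complex_Main
begin

text \<open>The projection lattice P(R) of the von Neumann algebra R is modelled by an
arbitrary complete lattice (type class complete_lattice): bot = 0, top = I,
inf = meet, Inf = infimum in P(R). The spectral family of A in R_sa is a map
E : real \<Rightarrow> P(R) that is increasing, right-continuous (E l is the infimum of
the E m, m > l) and, A being bounded, equal to 0 below some a and to I from some b on.\<close>

definition spectral_family :: "(real \<Rightarrow> 'a::complete_lattice) \<Rightarrow> bool" where
  "spectral_family E \<longleftrightarrow> mono E \<and> (\<forall>l. E l = Inf (E ` {l<..})) \<and>
     (\<exists>a b. a \<le> b \<and> (\<forall>l<a. E l = bot) \<and> (\<forall>l\<ge>b. E l = top))"

definition dual_ideal :: "'a::complete_lattice set \<Rightarrow> bool" where
  "dual_ideal J \<longleftrightarrow> J \<noteq> {} \<and> bot \<notin> J \<and> (\<forall>P\<in>J. \<forall>Q\<in>J. inf P Q \<in> J) \<and>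
     (\<forall>P\<in>J. \<forall>Q. P \<le> Q \<longrightarrow> Q \<in> J)"

definition dual_ideals :: "'a::complete_lattice set set" where
  "dual_ideals = {J. dual_ideal J}"

definition H :: "'a::complete_lattice \<Rightarrow> 'a set" where
  "H P = {Q. P \<le> Q}"

definition fA :: "(real \<Rightarrow> 'a::complete_lattice) \<Rightarrow> 'a set \<Rightarrow> real" where
  "fA E J = Inf {l. E l \<in> J}"

definition Jlam :: "(real \<Rightarrow> 'a::complete_lattice) \<Rightarrow> real \<Rightarrow> 'a set" where
  "Jlam E l = \<Inter> {J \<in> dual_ideals. fA E J = l}"

end

theory Submission
  imports Defs
begin

lemma top_in_dual: "dual_ideal J \<Longrightarrow> top \<in> J"
  unfolding dual_ideal_def by (metis all_not_in_conv top_greatest)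

lemma fA_props:
  fixes E :: "real \<Rightarrow> 'a::complete_lattice"
  assumes sf: "spectral_family E" and J: "dual_ideal J"
  shows "(\<forall>m>fA E J. E m \<in> J) \<and> (\<forall>x. E x \<in> J \<longrightarrow> fA E J \<le> x)"
proof -
  obtain a b where ab: "a \<le> b" "\<forall>l<a. E l = bot" "\<forall>l\<ge>b. E l = top" and mo: "mono E"
    using sf unfolding spectral_family_def by blast
  let ?S = "{x. E x \<in> J}"
  have "b \<in> ?S" using ab top_in_dual[OF J] by simp
  then have ne: "?S \<noteq> {}" by blast
  have bdd: "bdd_below ?S"
  proof (rule bdd_belowI[of _ a])
    fix x assume "x \<in> ?S"
    then show "a \<le> x" using ab J unfolding dual_ideal_def by (metis mem_Collect_eq not_le)
  qed
  have 1: "\<forall>m>fA E J. E m \<in> J"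
  proof (intro allI impI)
    fix m assume "fA E J < m"
    then obtain x where "x \<in> ?S" "x < m" using cInf_less_iff[OF ne bdd] unfolding fA_def by blast
    then show "E m \<in> J" using J mo unfolding dual_ideal_def mono_def
      by (metis less_imp_le mem_Collect_eq)
  qed
  have 2: "\<forall>x. E x \<in> J \<longrightarrow> fA E J \<le> x"
    unfolding fA_def using cInf_lower[OF _ bdd] by blast
  show ?thesis using 1 2 by blast
qed

theorem lemma2p16:
  fixes E :: "real \<Rightarrow> 'a::complete_lattice" and l :: real
  assumes "spectral_family E"
    and "l \<in> fA E ` dual_ideals"
  shows "Jlam E l = {P. \<exists>m>l. E m \<le> P}
    \<and> (Jlam E l = H (E l) \<longleftrightarrow> (\<exists>d>0. \<forall>m\<in>{l..l+d}. E m = E l))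
    \<and> E l = Inf (Jlam E l)"
proof -
  have mo: "mono E" and rc: "\<forall>l. E l = Inf (E ` {l<..})"
    using assms(1) unfolding spectral_family_def by blast+
  obtain J0 where J0: "dual_ideal J0" "fA E J0 = l"
    using assms(2) unfolding dual_ideals_def by blast
  note P0 = fA_props[OF assms(1) J0(1), unfolded J0(2)]
  define K where "K = {P. \<exists>m>l. E m \<le> P}"
  have Ksub: "K \<subseteq> J" if "J \<in> dual_ideals" "fA E J = l" for J
  proof
    fix P assume "P \<in> K"
    then obtain m where "m > l" "E m \<le> P" unfolding K_def by blast
    moreover have "dual_ideal J" using that unfolding dual_ideals_def by blast
    ultimately show "P \<in> J" using fA_props[OF assms(1), of J] that unfolding dual_ideal_def
      by blast
  qed
  have Kdual: "dual_ideal K"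
    unfolding dual_ideal_def
  proof (intro conjI ballI allI impI)
    show "K \<noteq> {}" unfolding K_def
      by (metis (mono_tags, lifting) empty_iff gt_ex mem_Collect_eq top_greatest)
    show "bot \<notin> K"
    proof
      assume "bot \<in> K"
      then obtain m where "m > l" "E m \<le> bot" unfolding K_def by blast
      then have "bot \<in> J0" using P0 by (metis bot.extremum_uniqueI)
      then show False using J0 unfolding dual_ideal_def by blast
    qed
    fix P Q assume "P \<in> K"
    then obtain m where m: "m > l" "E m \<le> P" unfolding K_def by blast
    { assume "Q \<in> K"
      then obtain n where n: "n > l" "E n \<le> Q" unfolding K_def by blast
      have "E (min m n) \<le> E m" "E (min m n) \<le> E n" using mo by (simp_all add: monoD)
      then have "E (min m n) \<le> inf P Q" using m n by (meson le_inf_iff order_trans)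
      then show "inf P Q \<in> K" unfolding K_def using m n
        by (metis (mono_tags, lifting) mem_Collect_eq min_less_iff_conj) }
    { assume "P \<le> Q" then show "Q \<in> K" unfolding K_def using m order_trans by blast }
  qed
  have fK: "fA E K = l"
  proof -
    note KP = fA_props[OF assms(1) Kdual]
    have "\<forall>x. E x \<in> K \<longrightarrow> l \<le> x"
    proof (intro allI impI)
      fix x assume "E x \<in> K"
      then obtain m where m: "m > l" "E m \<le> E x" unfolding K_def by blast
      show "l \<le> x"
      proof (rule ccontr)
        assume "\<not> l \<le> x"
        then have "E x \<le> E m" using mo m by (simp add: monoD)
        then have "E x = E m" using m by simp
        then have "E x \<in> J0" using P0 m by simp
        then show False using P0 \<open>\<not> l \<le> x\<close> by blast
      qed
    qed
    moreover have "\<forall>x>l. E x \<in> K" unfolding K_def by blast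
    ultimately have "l \<le> fA E K" "fA E K \<le> l" using KP
       apply (meson dense linorder_not_le)
      by (meson dense linorder_not_le \<open>\<forall>x>l. E x \<in> K\<close> KP)
    then show ?thesis by simp
  qed
  have JK: "Jlam E l = K"
  proof
    show "Jlam E l \<subseteq> K" unfolding Jlam_def using Kdual fK unfolding dual_ideals_def by blast
    show "K \<subseteq> Jlam E l" unfolding Jlam_def using Ksub by blast
  qed
  have geK: "E l \<le> P" if PK: "P \<in> K" for P
  proof -
    obtain m where "m > l" "E m \<le> P" using PK unfolding K_def by blast
    moreover have "E l \<le> E m" using mo \<open>m > l\<close> by (simp add: monoD)
    ultimately show ?thesis by (meson order_trans)
  qed
  have part3: "E l = Inf K"
  proof (rule order_antisym)
    show "E l \<le> Inf K" using geK by (simp add: Inf_greatest)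
    have "Inf K \<le> Inf (E ` {l<..})"
    proof (rule Inf_greatest)
      fix x assume "x \<in> E ` {l<..}"
      then obtain m where "m > l" "x = E m" by auto
      then have "x \<in> K" unfolding K_def by blast
      then show "Inf K \<le> x" by (rule Inf_lower)
    qed
    then show "Inf K \<le> E l" using rc by metis
  qed
  have part2: "K = H (E l) \<longleftrightarrow> (\<exists>d>0. \<forall>m\<in>{l..l+d}. E m = E l)"
  proof
    assume "K = H (E l)"
    then have "E l \<in> K" unfolding H_def by blast
    then obtain m where m: "m > l" "E m \<le> E l" unfolding K_def by blast
    show "\<exists>d>0. \<forall>m\<in>{l..l+d}. E m = E l"
    proof (intro exI[of _ "m - l"] conjI ballI)
      show "m - l > 0" using m by simp
      fix x assume "x \<in> {l..l + (m - l)}"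
      then have "l \<le> x" "x \<le> m" by auto
      then have "E l \<le> E x" "E x \<le> E m" using mo by (simp_all add: monoD)
      then show "E x = E l" using m(2) by (rule_tac order_antisym) (rule order_trans)
    qed
  next
    assume "\<exists>d>0. \<forall>m\<in>{l..l+d}. E m = E l"
    then obtain d where d0: "d > 0 \<and> (\<forall>m\<in>{l..l+d}. E m = E l)" ..
    then have "l + d \<in> {l..l+d}" by simp
    then have d: "d > 0" "E (l + d) = E l" using d0 by blast+
    show "K = H (E l)"
    proof
      show "K \<subseteq> H (E l)" using geK unfolding H_def by blast
      show "H (E l) \<subseteq> K"
      proof
        fix P assume "P \<in> H (E l)"
        then have "E (l + d) \<le> P" using d unfolding H_def by simp
        then show "P \<in> K" unfolding K_def using d(1) by (intro CollectI exI[of _ "l+d"]) simp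
      qed
    qed
  qed
  have "Jlam E l = {P. \<exists>m>l. E m \<le> P}" using JK K_def by simp
  moreover have "Jlam E l = H (E l) \<longleftrightarrow> (\<exists>d>0. \<forall>m\<in>{l..l+d}. E m = E l)"
    using JK part2 by simp
  moreover have "E l = Inf (Jlam E l)" using JK part3 by simp
  ultimately show ?thesis by blast
qed

end
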